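(* Consider a tiling of the sphere by $f>12$ angle congruent pentagons in which at most three distinct angle values occur at degree $3$ vertices. Then, after relabeling the distinct angle values, the complete set $S$ of angle combinations at degree $3$ vertices and the pentagon $P$ (multiset of the five angles of a tile) form one of the following pairs: - $S=\{\alpha^3\}$: $P=\alpha^4\beta$; - $S=\{\alpha\beta^2\}$: $P=\alpha^2\beta^3$ or $\alpha^3\beta^2$, or $P=\alpha^2\beta^2\gamma$; - $S=\{\alpha\beta\gamma,\alpha^3\}$: $P=\alpha^3\beta\gamma$ or $\alpha^2\beta^2\gamma$, or $P=\alpha^2\beta\gamma\delta$; - $S=\{\alpha\beta^2,\alpha^2\gamma\}$: $P=\alpha^3\beta\gamma$, $\alpha^2\beta^2\gamma$ or $\alpha^2\beta\gamma^2$, or $P=\alpha^2\beta\gamma\delta$; - $S=\{\alpha\beta^2,\gamma^3\}$: $P=\alpha^2\beta^2\gamma$, $\alpha^2\beta\gamma^2$, $\alpha\beta^3\gamma$, $\alpha\beta^2\gamma^2$ or $\alpha\beta\gamma^3$, or $P=\alpha\beta^2\gamma\delta$ or $\alpha\beta\gamma^2\delta$. In each case, the angle values named are pairwise distinct, and in the listed pentagons the last angle letter not occurring in $S$ (namely $\beta$ in the first case, $\gamma$ in $\alpha^2\beta^2\gamma$ of the second case, and $\delta$ in the others) denotes an angle value that appears at no degree $3$ vertex; all other letters are exactly the values occurring in $S$.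
   Context: A spherical tiling by angle congruent pentagons is a graph embedded in the sphere whose faces (tiles) are all pentagons, edge-to-edge with every vertex of degree at least $3$; each corner carries a positive real angle, the angles at each vertex sum to $2\pi$, and every tile has the same multiset of five angles. Multiplicative notation is used for multisets: e.g. $\alpha\beta^2$ is a degree $3$ vertex with corner angles $\alpha,\beta,\beta$, and $\alpha^2\beta\gamma\delta$ is a pentagon with angles $\alpha,\alpha,\beta,\gamma,\delta$. $f$ is the number of tiles. *)

theory Defs
  imports Complex_Main "HOL-Library.Multiset" "HOL-Combinatorics.Permutations"
begin

text \<open>Combinatorial maps: a finite set of darts D, a vertex rotation sg and a
fixed-point-free edge involution ep (both permutations of D).  Each dart corresponds to exactly one corner, i.e. one
incidence of a vertex (its sg-orbit) with a face (its phi-orbit).\<close>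

definition orb :: "('d \<Rightarrow> 'd) \<Rightarrow> 'd \<Rightarrow> 'd set" where
  "orb f d = {(f ^^ n) d | n. True}"

definition map_vertices :: "'d set \<Rightarrow> ('d \<Rightarrow> 'd) \<Rightarrow> 'd set set" where
  "map_vertices D sg = orb sg ` D"

definition map_edges :: "'d set \<Rightarrow> ('d \<Rightarrow> 'd) \<Rightarrow> 'd set set" where
  "map_edges D ep = orb ep ` D"

definition map_faces :: "'d set \<Rightarrow> ('d \<Rightarrow> 'd) \<Rightarrow> ('d \<Rightarrow> 'd) \<Rightarrow> 'd set set" where
  "map_faces D sg ep = orb (sg \<circ> ep) ` D"

text \<open>A tiling of the sphere by pentagons (edge-to-edge, all vertices of degree at
least 3): a connected combinatorial map of genus 0 (Euler characteristic 2) whose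
faces all have 5 corners at 5 distinct vertices.\<close>

definition sphere_pentagon_tiling :: "'d set \<Rightarrow> ('d \<Rightarrow> 'd) \<Rightarrow> ('d \<Rightarrow> 'd) \<Rightarrow> bool" where
  "sphere_pentagon_tiling D sg ep \<longleftrightarrow>
     finite D \<and> D \<noteq> {} \<and> sg permutes D \<and> ep permutes D \<and>
     (\<forall>d\<in>D. ep d \<noteq> d \<and> ep (ep d) = d) \<and>
     (\<forall>x\<in>D. \<forall>y\<in>D. (x, y) \<in> ({(z, sg z) | z. z \<in> D} \<union> {(z, ep z) | z. z \<in> D})\<^sup>*) \<and>
     int (card (map_vertices D sg)) - int (card (map_edges D ep)) + int (card (map_faces D sg ep)) = 2 \<and>
     (\<forall>d\<in>D. card (orb sg d) \<ge> 3) \<and>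
     (\<forall>d\<in>D. card (orb (sg \<circ> ep) d) = 5 \<and> inj_on (orb sg) (orb (sg \<circ> ep) d))"

definition angle_congruent ::
  "'d set \<Rightarrow> ('d \<Rightarrow> 'd) \<Rightarrow> ('d \<Rightarrow> 'd) \<Rightarrow> ('d \<Rightarrow> real) \<Rightarrow> real multiset \<Rightarrow> bool" where
  "angle_congruent D sg ep th P \<longleftrightarrow>
     sphere_pentagon_tiling D sg ep \<and>
     (\<forall>d\<in>D. th d > 0) \<and>
     (\<forall>v\<in>map_vertices D sg. (\<Sum>d\<in>v. th d) = 2 * pi) \<and>
     (\<forall>F\<in>map_faces D sg ep. image_mset th (mset_set F) = P)"

definition deg3_combos :: "'d set \<Rightarrow> ('d \<Rightarrow> 'd) \<Rightarrow> ('d \<Rightarrow> real) \<Rightarrow> real multiset set" where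
  "deg3_combos D sg th =
     (\<lambda>v. image_mset th (mset_set v)) ` {v \<in> map_vertices D sg. card v = 3}"

end

theory Submission
  imports Defs "HOL-Combinatorics.Orbits"
begin


definition Goal :: "real multiset set \<Rightarrow> real multiset \<Rightarrow> bool" where
  "Goal S P \<longleftrightarrow> (\<exists>a b c d :: real. distinct [a, b, c, d] \<and>
      ((S = {{#a, a, a#}} \<and> P = {#a, a, a, a, b#}) \<or>
      (S = {{#a, b, b#}} \<and>
         (P = {#a, a, b, b, b#} \<or> P = {#a, a, a, b, b#} \<or> P = {#a, a, b, b, c#})) \<or>
      (S = {{#a, b, c#}, {#a, a, a#}} \<and>
         (P = {#a, a, a, b, c#} \<or> P = {#a, a, b, b, c#} \<or> P = {#a, a, b, c, d#})) \<or>
      (S = {{#a, b, b#}, {#a, a, c#}} \<and>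
         (P = {#a, a, a, b, c#} \<or> P = {#a, a, b, b, c#} \<or> P = {#a, a, b, c, c#} \<or>
          P = {#a, a, b, c, d#})) \<or>
      (S = {{#a, b, b#}, {#c, c, c#}} \<and>
         (P = {#a, a, b, b, c#} \<or> P = {#a, a, b, c, c#} \<or> P = {#a, b, b, b, c#} \<or>
          P = {#a, b, b, c, c#} \<or> P = {#a, b, c, c, c#} \<or>
          P = {#a, b, b, c, d#} \<or> P = {#a, b, c, c, d#}))))"


lemma goalI3: "distinct [a, b, c, d] \<Longrightarrow> S = {{#a, b, c#}, {#a, a, a#}} \<Longrightarrow>
   (P = {#a, a, a, b, c#} \<or> P = {#a, a, b, b, c#} \<or> P = {#a, a, b, c, d#}) \<Longrightarrow> Goal S P"
  unfolding Goal_def by blast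

lemma goalI4: "distinct [a, b, c, d] \<Longrightarrow> S = {{#a, b, b#}, {#a, a, c#}} \<Longrightarrow>
   (P = {#a, a, a, b, c#} \<or> P = {#a, a, b, b, c#} \<or> P = {#a, a, b, c, c#} \<or>
          P = {#a, a, b, c, d#}) \<Longrightarrow> Goal S P"
  unfolding Goal_def by blast

lemma goalI5: "distinct [a, b, c, d] \<Longrightarrow> S = {{#a, b, b#}, {#c, c, c#}} \<Longrightarrow>
   (P = {#a, a, b, b, c#} \<or> P = {#a, a, b, c, c#} \<or> P = {#a, b, b, b, c#} \<or>
          P = {#a, b, b, c, c#} \<or> P = {#a, b, c, c, c#} \<or>
          P = {#a, b, b, c, d#} \<or> P = {#a, b, c, c, d#}) \<Longrightarrow> Goal S P"
  unfolding Goal_def by blast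

lemma P3:
  fixes P :: "real multiset"
  assumes "distinct [x, y, z]" "size P = 5"
  defines "R \<equiv> replicate_mset (count P x) x + replicate_mset (count P y) y + replicate_mset (count P z) z"
  shows P3_le: "count P x + count P y + count P z \<le> 5"
    and P3_5: "count P x + count P y + count P z = 5 \<Longrightarrow> P = R"
    and P3_4: "count P x + count P y + count P z = 4 \<Longrightarrow> \<exists>d. d \<notin> {x, y, z} \<and> P = R + {#d#}"
proof -
  have sub: "R \<subseteq># P" unfolding R_def subseteq_mset_def using assms(1) by auto
  have sz: "size R = count P x + count P y + count P z" unfolding R_def by simp
  show "count P x + count P y + count P z \<le> 5" using size_mset_mono[OF sub] sz assms(2) by simp
  have dec: "P = R + (P - R)" using sub by (simp add: subset_mset.add_diff_inverse)
  have szd: "size (P - R) = 5 - (count P x + count P y + count P z)"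
    using size_Diff_submset[OF sub] sz assms(2) by simp
  show "count P x + count P y + count P z = 5 \<Longrightarrow> P = R"
    using dec szd by simp
  assume h4: "count P x + count P y + count P z = 4"
  then obtain d where d: "P - R = {#d#}" using szd size_1_singleton_mset by auto
  have "count R w = count P w" if "w \<in> {x,y,z}" for w
    using that assms(1) unfolding R_def by auto
  hence "d \<notin> {x,y,z}" using d
    by (metis add_mset_eq_single count_diff count_single diff_self_eq_0 insert_DiffM2 nat.distinct(1) single_subset_iff subset_mset.le_iff_add union_single_eq_member zero_less_Suc less_numeral_extra(3) count_greater_zero_iff count_single)
  then show "\<exists>d. d \<notin> {x, y, z} \<and> P = R + {#d#}" using dec d by metis
qed


lemma P3_5c:
  fixes P :: "real multiset"
  assumes "distinct [x, y, z]" "size P = 5" "count P x = i" "count P y = j" "count P z = k" "i + j + k = 5"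
  shows "P = replicate_mset i x + replicate_mset j y + replicate_mset k z"
proof -
  have e: "P = replicate_mset (count P x) x + replicate_mset (count P y) y + replicate_mset (count P z) z"
    by (rule P3_5[OF assms(1,2)]) (use assms(3-6) in simp)
  from e show ?thesis by (simp only: assms(3-5))
qed

lemma P3_4c:
  fixes P :: "real multiset"
  assumes "distinct [x, y, z]" "size P = 5" "count P x = i" "count P y = j" "count P z = k" "i + j + k = 4"
  shows "\<exists>d. d \<notin> {x, y, z} \<and> P = replicate_mset i x + replicate_mset j y + replicate_mset k z + {#d#}"
proof -
  obtain d where e: "d \<notin> {x, y, z}" "P = replicate_mset (count P x) x + replicate_mset (count P y) y + replicate_mset (count P z) z + {#d#}"
    using P3_4[OF assms(1,2)] assms(3-6) by blast
  from e(2) have "P = replicate_mset i x + replicate_mset j y + replicate_mset k z + {#d#}"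
    by (simp only: assms(3-5))
  then show ?thesis using e(1) by blast
qed

lemma sums4: "(2::nat) + 1 + 1 = 4" "(1::nat) + 2 + 1 = 4" "(1::nat) + 1 + 2 = 4"
  by simp_all

lemma P1:
  fixes P :: "real multiset"
  assumes "size P = 5" "count P x = 4"
  shows "\<exists>d. d \<noteq> x \<and> P = replicate_mset 4 x + {#d#}"
proof -
  have sub: "replicate_mset 4 x \<subseteq># P" using assms(2) unfolding subseteq_mset_def by auto
  have dec: "P = replicate_mset 4 x + (P - replicate_mset 4 x)"
    using sub by (simp add: subset_mset.add_diff_inverse)
  have "size (P - replicate_mset 4 x) = 1" using size_Diff_submset[OF sub] assms(1) by simp
  then obtain d where d: "P - replicate_mset 4 x = {#d#}" using size_1_singleton_mset by auto
  have "count (P - replicate_mset 4 x) x = 0" using assms(2) by simp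
  hence "d \<noteq> x" using d by auto
  then show ?thesis using dec d by metis
qed

lemma fresh2: "a \<noteq> b \<Longrightarrow> \<exists>y z::real. distinct [a, b, y, z]"
  by (rule exI[of _ "\<bar>a\<bar> + \<bar>b\<bar> + 1"], rule exI[of _ "\<bar>a\<bar> + \<bar>b\<bar> + 2"]) auto

lemma fresh1: "\<exists>y z::real. distinct [a, y, z]"
  by (rule exI[of _ "\<bar>a\<bar> + 1"], rule exI[of _ "\<bar>a\<bar> + 2"]) auto


lemma fresh3: "\<exists>d::real. d \<notin> {x, y, z}"
  by (rule exI[of _ "\<bar>x\<bar> + \<bar>y\<bar> + \<bar>z\<bar> + 1"]) auto

lemma nat_ineq: "(6::real) < 3 * real a + 2 * real b \<Longrightarrow> 6 < 3 * a + 2 * b"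
  by linarith


lemma enum5:
  fixes p q r :: nat
  assumes "1 \<le> p" "1 \<le> q" "1 \<le> r" "p + q + r \<le> 5" "4 \<le> p + q + r" "6 < 3 * q + 2 * r"
  shows "(p + q + r = 5 \<and> ((p = 1 \<and> q = 2 \<and> r = 2) \<or> (p = 1 \<and> q = 3 \<and> r = 1) \<or>
       (p = 1 \<and> q = 1 \<and> r = 3) \<or> (p = 2 \<and> q = 2 \<and> r = 1) \<or> (p = 2 \<and> q = 1 \<and> r = 2)))
    \<or> (p + q + r = 4 \<and> ((p = 1 \<and> q = 2 \<and> r = 1) \<or> (p = 1 \<and> q = 1 \<and> r = 2)))"
proof -
  have b: "p \<le> 3" "q \<le> 3" "r \<le> 3" using assms(1-4) by linarith+
  have "p \<in> {1,2,3}" using assms(1) b(1) by auto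
  moreover have "q \<in> {1,2,3}" using assms(2) b(2) by auto
  moreover have "r \<in> {1,2,3}" using assms(3) b(3) by auto
  ultimately show ?thesis using assms(4-6) by (elim insertE emptyE; simp)
qed

lemma mset3: "size M = 3 \<Longrightarrow> \<exists>x y z. M = {#x, y, z#}"
proof -
  assume h: "size M = 3"
  then obtain x M1 where 1: "M = add_mset x M1" using size_eq_Suc_imp_eq_union[of M 2] by auto
  hence "size M1 = Suc 1" using h by simp
  then obtain y M2 where 2: "M1 = add_mset y M2" using size_eq_Suc_imp_eq_union[of M1 1] by auto
  hence "size M2 = 1" using h 1 by simp
  then obtain z where 3: "M2 = {#z#}" using size_1_singleton_mset by auto
  show ?thesis using 1 2 3 by auto
qed

lemma card4: "finite U \<Longrightarrow> card U \<le> 3 \<Longrightarrow> {a, b, c, d} \<subseteq> U \<Longrightarrow> distinct [a, b, c, d] \<Longrightarrow> False"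
proof -
  assume "finite U" "card U \<le> 3" "{a, b, c, d} \<subseteq> U" "distinct [a, b, c, d]"
  then have "card {a, b, c, d} \<le> card U" by (intro card_mono) auto
  moreover have "card {a, b, c, d} = 4" using \<open>distinct [a, b, c, d]\<close> by auto
  ultimately show False using \<open>card U \<le> 3\<close> by simp
qed

lemma card3eq: "finite U \<Longrightarrow> card U \<le> 3 \<Longrightarrow> {a, b, c} \<subseteq> U \<Longrightarrow> distinct [a, b, c] \<Longrightarrow> U = {a, b, c}"
proof -
  assume h: "finite U" "card U \<le> 3" "{a, b, c} \<subseteq> U" "distinct [a, b, c]"
  have "card {a, b, c} = 3" using h(4) by auto
  then show "U = {a, b, c}" using card_subset_eq[OF h(1) h(3)] h(2) card_mono[OF h(1) h(3)] by simp
qed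

locale core =
  fixes S :: "real multiset set" and P :: "real multiset" and f :: real
    and W :: "'w set" and m :: "'w \<Rightarrow> real multiset"
  assumes finW: "finite W" and Sdef: "S = m ` W" and cardW: "real (card W) > f"
    and f12: "f > 12"
    and cnt: "\<And>x. (\<Sum>w\<in>W. real (count (m w) x)) \<le> real (count P x) * f"
    and combo: "\<And>M. M \<in> S \<Longrightarrow> size M = 3 \<and> sum_mset M = 2 * pi"
    and sizeP: "size P = 5"
    and sumP: "sum_mset P = 3 * pi + 4 * pi / f"
    and three: "card (\<Union>M\<in>S. set_mset M) \<le> 3"
begin

lemma weight:
  fixes wa wb wc :: real
  assumes "wa \<ge> 0" "wb \<ge> 0" "wc \<ge> 0"
    and h: "\<And>M. M \<in> S \<Longrightarrow> wa * real (count M a) + wb * real (count M b) + wc * real (count M c) \<ge> 1"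
  shows "wa * real (count P a) + wb * real (count P b) + wc * real (count P c) > 1"
proof -
  have "real (card W) = (\<Sum>w\<in>W. 1)" by simp
  also have "\<dots> \<le> (\<Sum>w\<in>W. wa * real (count (m w) a) + wb * real (count (m w) b) + wc * real (count (m w) c))"
    by (rule sum_mono) (use h Sdef in auto)
  also have "\<dots> = wa * (\<Sum>w\<in>W. real (count (m w) a)) + wb * (\<Sum>w\<in>W. real (count (m w) b))
      + wc * (\<Sum>w\<in>W. real (count (m w) c))"
    by (simp add: sum.distrib sum_distrib_left)
  also have "\<dots> \<le> wa * (count P a * f) + wb * (count P b * f) + wc * (count P c * f)"
    by (intro add_mono mult_left_mono cnt assms(1-3))
  finally have "f < (wa * real (count P a) + wb * real (count P b) + wc * real (count P c)) * f"
    using cardW by (simp add: algebra_simps)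
  then show ?thesis using f12 by simp
qed

lemma appear:
  assumes "M \<in> S" "x \<in># M"
  shows "count P x \<ge> 1"
proof -
  obtain w where w: "w \<in> W" "M = m w" using assms Sdef by auto
  have "real (count (m w) x) \<le> (\<Sum>w\<in>W. real (count (m w) x))"
    by (rule member_le_sum) (use w finW in auto)
  also have "\<dots> \<le> count P x * f" by (rule cnt)
  finally have le: "real (count (m w) x) \<le> count P x * f" .
  have "count (m w) x \<ge> 1" using assms w by (simp add: Suc_le_eq)
  hence "count P x * f \<ge> 1" using le by linarith
  then show ?thesis using f12
    by (metis less_one mult_not_zero not_le of_nat_0 zero_less_one)
qed


lemma shape1:
  assumes hS: "S = {{#a, a, a#}}"
  shows "Goal S P"
proof -
  have a: "3 * a = 2 * pi" using combo[of "{#a,a,a#}"] hS by simp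
  have "(1/3) * real (count P a) + 0 * real (count P a) + 0 * real (count P a) > 1"
    by (rule weight) (auto simp: hS)
  hence ge: "count P a \<ge> 4" by simp
  obtain y z where yz: "distinct [a, y, z]" using fresh1 by blast
  have le: "count P a + count P y + count P z \<le> 5" using P3_le[OF yz sizeP] .
  show ?thesis
  proof (cases "count P a = 5")
    case True
    hence c0: "count P y = 0" "count P z = 0" using le by auto
    have "P = replicate_mset 5 a + replicate_mset 0 y + replicate_mset 0 z"
      by (rule P3_5c[OF yz sizeP True c0]) simp
    hence "P = replicate_mset 5 a" by simp
    hence "sum_mset P = 5 * a" by simp
    hence "5 * a = 3 * pi + 4 * pi / f" using sumP by simp
    hence "pi / 3 = 4 * pi / f" using a by simp
    hence "f = 12" using f12 pi_gt_zero by (simp add: field_simps)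
    then show ?thesis using f12 by simp
  next
    case False
    hence c4: "count P a = 4" using le ge by auto
    from P1[OF sizeP this] obtain d where d: "d \<noteq> a"
      "P = replicate_mset 4 a + {#d#}" by auto
    obtain c e where ce: "distinct [a, d, c, e]" using fresh2[of a d] d by auto
    have "P = {#a, a, a, a, d#}" using d by (simp add: numeral_eq_Suc)
    then show ?thesis unfolding Goal_def using hS ce by blast
  qed
qed


lemma shape2:
  assumes hS: "S = {{#x, y, y#}}" and xy: "x \<noteq> y"
  shows "Goal S P"
proof -
  have "(1/2) * real (count P y) + 0 * real (count P y) + 0 * real (count P y) > 1"
    by (rule weight) (use xy in \<open>auto simp: hS\<close>)
  hence gy: "count P y \<ge> 3" by simp
  have "1 * real (count P x) + 0 * real (count P x) + 0 * real (count P x) > 1"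
    by (rule weight) (use xy in \<open>auto simp: hS\<close>)
  hence gx: "count P x \<ge> 2" by simp
  obtain z w where yz: "distinct [x, y, z, w]" using fresh2[OF xy] by blast
  hence d3: "distinct [x, y, z]" by simp
  have le: "count P x + count P y + count P z \<le> 5" using P3_le[OF d3 sizeP] .
  hence c: "count P x = 2" "count P y = 3" "count P z = 0" using gx gy by auto
  have "P = replicate_mset 2 x + replicate_mset 3 y + replicate_mset 0 z"
    by (rule P3_5c[OF d3 sizeP c]) simp
  hence "P = {#x, x, y, y, y#}" by (simp add: numeral_eq_Suc)
  then show ?thesis unfolding Goal_def using hS yz by blast
qed

lemma shape3:
  assumes hS: "S = {{#x, y, z#}, {#x, x, x#}}" and d: "distinct [x, y, z]"
  shows "Goal S P"
proof -
  have "1 * real (count P x) + 0 * real (count P x) + 0 * real (count P x) > 1"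
    by (rule weight) (use d in \<open>auto simp: hS\<close>)
  hence gx: "count P x \<ge> 2" by simp
  have gy: "count P y \<ge> 1" by (rule appear[of "{#x, y, z#}"]) (auto simp: hS)
  have gz: "count P z \<ge> 1" by (rule appear[of "{#x, y, z#}"]) (auto simp: hS)
  have le: "count P x + count P y + count P z \<le> 5" using P3_le[OF d sizeP] .
  obtain e where e: "e \<notin> {x, y, z}" using fresh3 by blast
  have S': "S = {{#x, z, y#}, {#x, x, x#}}" using hS by (simp add: add_mset_commute)
  consider "count P x = 3" "count P y = 1" "count P z = 1"
    | "count P x = 2" "count P y = 2" "count P z = 1"
    | "count P x = 2" "count P y = 1" "count P z = 2"
    | "count P x = 2" "count P y = 1" "count P z = 1"
    using gx gy gz le by linarith
  then show ?thesis
  proof cases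
    case 1
    have "P = {#x, x, x, y, z#}"
      using P3_5c[OF d sizeP 1] by (simp add: multiset_eq_iff)
    note hP = this
    have dd: "distinct [x, y, z, e]" using d e by auto
    show ?thesis by (rule goalI3[OF dd hS]) (use hP in blast)
  next
    case 2
    have "P = {#x, x, y, y, z#}"
      using P3_5c[OF d sizeP 2] by (simp add: multiset_eq_iff)
    note hP = this
    have dd: "distinct [x, y, z, e]" using d e by auto
    show ?thesis by (rule goalI3[OF dd hS]) (use hP in blast)
  next
    case 3
    have "P = {#x, x, z, z, y#}"
      using P3_5c[OF d sizeP 3] by (simp add: multiset_eq_iff)
    note hP = this
    have dd: "distinct [x, z, y, e]" using d e by auto
    show ?thesis by (rule goalI3[OF dd S']) (use hP in blast)
  next
    case 4
    obtain g where g: "g \<notin> {x, y, z}"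
      "P = replicate_mset 2 x + replicate_mset 1 y + replicate_mset 1 z + {#g#}"
      using P3_4c[OF d sizeP 4 sums4(1)] by blast
    hence "P = {#x, x, y, z, g#}" by (simp add: multiset_eq_iff)
    note hP = this
    have dd: "distinct [x, y, z, g]" using d g by auto
    show ?thesis by (rule goalI3[OF dd hS]) (use hP in blast)
  qed
qed


lemma shape4:
  assumes hS: "S = {{#x, x, y#}, {#y, y, z#}}" and d0: "distinct [x, y, z]"
  shows "Goal S P"
proof -
  have d: "distinct [y, x, z]" using d0 by auto
  have "1 * real (count P y) + 0 * real (count P y) + 0 * real (count P y) > 1"
    by (rule weight) (use d in \<open>auto simp: hS\<close>)
  hence gy: "count P y \<ge> 2" by simp
  have gx: "count P x \<ge> 1" by (rule appear[of "{#x, x, y#}"]) (auto simp: hS)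
  have gz: "count P z \<ge> 1" by (rule appear[of "{#y, y, z#}"]) (auto simp: hS)
  have le: "count P y + count P x + count P z \<le> 5" using P3_le[OF d sizeP] .
  obtain e where e: "e \<notin> {x, y, z}" using fresh3 by blast
  have S': "S = {{#y, x, x#}, {#y, y, z#}}" using hS by (simp add: add_mset_commute)
  consider "count P y = 3" "count P x = 1" "count P z = 1"
    | "count P y = 2" "count P x = 2" "count P z = 1"
    | "count P y = 2" "count P x = 1" "count P z = 2"
    | "count P y = 2" "count P x = 1" "count P z = 1"
    using gx gy gz le by linarith
  then show ?thesis
  proof cases
    case 1
    have "P = {#y, y, y, x, z#}"
      using P3_5c[OF d sizeP 1] by (simp add: multiset_eq_iff)
    note hP = this
    have dd: "distinct [y, x, z, e]" using d e by auto
    show ?thesis by (rule goalI4[OF dd S']) (use hP in blast)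
  next
    case 2
    have "P = {#y, y, x, x, z#}"
      using P3_5c[OF d sizeP 2] by (simp add: multiset_eq_iff)
    note hP = this
    have dd: "distinct [y, x, z, e]" using d e by auto
    show ?thesis by (rule goalI4[OF dd S']) (use hP in blast)
  next
    case 3
    have "P = {#y, y, x, z, z#}"
      using P3_5c[OF d sizeP 3] by (simp add: multiset_eq_iff)
    note hP = this
    have dd: "distinct [y, x, z, e]" using d e by auto
    show ?thesis by (rule goalI4[OF dd S']) (use hP in blast)
  next
    case 4
    obtain g where g: "g \<notin> {y, x, z}"
      "P = replicate_mset 2 y + replicate_mset 1 x + replicate_mset 1 z + {#g#}"
      using P3_4c[OF d sizeP 4 sums4(1)] by blast
    hence "P = {#y, y, x, z, g#}" by (simp add: multiset_eq_iff)
    note hP = this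
    have dd: "distinct [y, x, z, g]" using d g by auto
    show ?thesis by (rule goalI4[OF dd S']) (use hP in blast)
  qed
qed

lemma shape5:
  assumes hS: "S = {{#x, x, y#}, {#z, z, z#}}" and d0: "distinct [x, y, z]"
  shows "Goal S P"
proof -
  have d: "distinct [y, x, z]" using d0 by auto
  have "(1/3) * real (count P y) + (1/3) * real (count P x) + (1/3) * real (count P z) > 1"
    by (rule weight) (use d in \<open>auto simp: hS\<close>)
  hence "3 < real (count P y) + real (count P x) + real (count P z)" by simp
  hence tot: "count P y + count P x + count P z \<ge> 4" by linarith
  have "0 * real (count P y) + (1/2) * real (count P x) + (1/3) * real (count P z) > 1"
    by (rule weight) (use d in \<open>auto simp: hS\<close>)
  hence "(6::real) < 3 * real (count P x) + 2 * real (count P z)" by simp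
  hence w: "6 < 3 * count P x + 2 * count P z" by (rule nat_ineq)
  have gx: "count P x \<ge> 1" by (rule appear[of "{#x, x, y#}"]) (auto simp: hS)
  have gy: "count P y \<ge> 1" by (rule appear[of "{#x, x, y#}"]) (auto simp: hS)
  have gz: "count P z \<ge> 1" by (rule appear[of "{#z, z, z#}"]) (auto simp: hS)
  have le: "count P y + count P x + count P z \<le> 5" using P3_le[OF d sizeP] .
  obtain e where e: "e \<notin> {x, y, z}" using fresh3 by blast
  have S': "S = {{#y, x, x#}, {#z, z, z#}}" using hS by (simp add: add_mset_commute)
  consider (five) "count P y + count P x + count P z = 5"
      "(count P y = 1 \<and> count P x = 2 \<and> count P z = 2) \<or> (count P y = 1 \<and> count P x = 3 \<and> count P z = 1) \<or>
       (count P y = 1 \<and> count P x = 1 \<and> count P z = 3) \<or> (count P y = 2 \<and> count P x = 2 \<and> count P z = 1) \<or>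
       (count P y = 2 \<and> count P x = 1 \<and> count P z = 2)"
    | (four) "count P y + count P x + count P z = 4"
      "(count P y = 1 \<and> count P x = 2 \<and> count P z = 1) \<or> (count P y = 1 \<and> count P x = 1 \<and> count P z = 2)"
    using enum5[OF gy gx gz le tot w] by blast
  then show ?thesis
  proof cases
    case five
    have "P = {#y, x, x, z, z#} \<or> P = {#y, x, x, x, z#} \<or> P = {#y, x, z, z, z#} \<or>
      P = {#y, y, x, x, z#} \<or> P = {#y, y, x, z, z#}"
    proof -
      consider "count P y = 1" "count P x = 2" "count P z = 2" | "count P y = 1" "count P x = 3" "count P z = 1"
        | "count P y = 1" "count P x = 1" "count P z = 3" | "count P y = 2" "count P x = 2" "count P z = 1"
        | "count P y = 2" "count P x = 1" "count P z = 2"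
        using five(2) by blast
      then show ?thesis
      proof cases
        case 1
        have "P = {#y, x, x, z, z#}" using P3_5c[OF d sizeP 1] by (simp add: multiset_eq_iff)
        thus ?thesis by blast
      next
        case 2
        have "P = {#y, x, x, x, z#}" using P3_5c[OF d sizeP 2] by (simp add: multiset_eq_iff)
        thus ?thesis by blast
      next
        case 3
        have "P = {#y, x, z, z, z#}" using P3_5c[OF d sizeP 3] by (simp add: multiset_eq_iff)
        thus ?thesis by blast
      next
        case 4
        have "P = {#y, y, x, x, z#}" using P3_5c[OF d sizeP 4] by (simp add: multiset_eq_iff)
        thus ?thesis by blast
      next
        case 5
        have "P = {#y, y, x, z, z#}" using P3_5c[OF d sizeP 5] by (simp add: multiset_eq_iff)
        thus ?thesis by blast
      qed
    qed
    note hP = this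
    have dd: "distinct [y, x, z, e]" using d e by auto
    show ?thesis by (rule goalI5[OF dd S']) (use hP in blast)
  next
    case four
    consider "count P y = 1" "count P x = 2" "count P z = 1" | "count P y = 1" "count P x = 1" "count P z = 2"
      using four(2) by blast
    then show ?thesis
    proof cases
      case 1
      obtain g where g: "g \<notin> {y, x, z}"
        "P = replicate_mset 1 y + replicate_mset 2 x + replicate_mset 1 z + {#g#}"
        using P3_4c[OF d sizeP 1 sums4(2)] by blast
      hence "P = {#y, x, x, z, g#}" by (simp add: multiset_eq_iff)
      hence hP: "P = {#y, x, x, z, g#} \<or> P = {#y, x, z, z, g#}" by blast
      have dd: "distinct [y, x, z, g]" using d g by auto
      show ?thesis by (rule goalI5[OF dd S']) (use hP in blast)
    next
      case 2
      obtain g where g: "g \<notin> {y, x, z}"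
        "P = replicate_mset 1 y + replicate_mset 1 x + replicate_mset 2 z + {#g#}"
        using P3_4c[OF d sizeP 2 sums4(3)] by blast
      hence "P = {#y, x, z, z, g#}" by (simp add: multiset_eq_iff)
      hence hP: "P = {#y, x, x, z, g#} \<or> P = {#y, x, z, z, g#}" by blast
      have dd: "distinct [y, x, z, g]" using d g by auto
      show ?thesis by (rule goalI5[OF dd S']) (use hP in blast)
    qed
  qed
qed


definition U where "U = (\<Union>M\<in>S. set_mset M)"

lemma finS: "finite S" using finW Sdef by simp

lemma finU: "finite U" unfolding U_def using finS by auto

lemma cardU: "card U \<le> 3" using three unfolding U_def .

lemma inU: "M \<in> S \<Longrightarrow> x \<in># M \<Longrightarrow> x \<in> U" unfolding U_def by auto

lemma Sne: "S \<noteq> {}"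
proof
  assume "S = {}"
  hence "W = {}" using Sdef by simp
  thus False using cardW f12 by simp
qed

lemma sum3: "{#x, y, z#} \<in> S \<Longrightarrow> x + y + z = 2 * pi"
  using combo[of "{#x, y, z#}"] by (simp add: algebra_simps)

lemma form3: "M \<in> S \<Longrightarrow> \<exists>x y z. M = {#x, y, z#}"
  using combo mset3 by blast


lemma caseA:
  assumes h: "{#x, y, z#} \<in> S" and d: "distinct [x, y, z]"
  shows "Goal S P"
proof -
  have U: "U = {x, y, z}"
    by (rule card3eq[OF finU cardU _ d]) (use inU[OF h] in auto)
  have sxyz: "x + y + z = 2 * pi" using sum3[OF h] .
  have allM: "M = {#x, y, z#} \<or> M = {#x, x, x#} \<or> M = {#y, y, y#} \<or> M = {#z, z, z#}"
    if M: "M \<in> S" for M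
  proof -
    obtain p q r where pqr: "M = {#p, q, r#}" using form3[OF M] by blast
    have s: "p + q + r = x + y + z" using sum3 M pqr sxyz by simp
    have "p \<in> {x, y, z}" "q \<in> {x, y, z}" "r \<in> {x, y, z}"
      using inU[OF M] pqr U by auto
    then show ?thesis using s d pqr by (auto simp: add_mset_commute)
  qed
  have xyz_comm: "{#y, x, z#} = {#x, y, z#}" "{#z, x, y#} = {#x, y, z#}"
    by (simp_all add: add_mset_commute)
  show ?thesis
  proof (cases "{#x, x, x#} \<in> S")
    case True
    have "{#y, y, y#} \<notin> S" "{#z, z, z#} \<notin> S"
      using sum3[of y y y] sum3[of z z z] sum3[OF True] d by auto
    hence "S = {{#x, y, z#}, {#x, x, x#}}" using allM h True by blast
    then show ?thesis using shape3 d by blast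
  next
    case nx: False
    show ?thesis
    proof (cases "{#y, y, y#} \<in> S")
      case True
      have "{#z, z, z#} \<notin> S"
        using sum3[of y y y] sum3[of z z z] True d by auto
      hence "S = {{#x, y, z#}, {#y, y, y#}}" using allM h True nx by blast
      hence "S = {{#y, x, z#}, {#y, y, y#}}" by (simp only: xyz_comm)
      then show ?thesis using shape3[of y x z] d by auto
    next
      case ny: False
      show ?thesis
      proof (cases "{#z, z, z#} \<in> S")
        case True
        hence "S = {{#x, y, z#}, {#z, z, z#}}" using allM h True nx ny by blast
        hence "S = {{#z, x, y#}, {#z, z, z#}}" by (simp only: xyz_comm)
        then show ?thesis using shape3[of z x y] d by auto
      next
        case False
        hence S1: "S = {{#x, y, z#}}" using allM h nx ny by auto
        have "1 * real (count P x) + 0 * real (count P x) + 0 * real (count P x) > 1"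
          by (rule weight) (use d in \<open>auto simp: S1\<close>)
        moreover have "1 * real (count P y) + 0 * real (count P x) + 0 * real (count P x) > 1"
          by (rule weight) (use d in \<open>auto simp: S1\<close>)
        moreover have "1 * real (count P z) + 0 * real (count P x) + 0 * real (count P x) > 1"
          by (rule weight) (use d in \<open>auto simp: S1\<close>)
        ultimately have "count P x + count P y + count P z \<ge> 6" by simp
        then show ?thesis using P3_le[OF d sizeP] by simp
      qed
    qed
  qed
qed


lemma chain_case:
  assumes h1: "{#p, p, q#} \<in> S" and h2: "{#q, q, r#} \<in> S" and d: "distinct [p, q, r]"
    and allM: "\<And>M. M \<in> S \<Longrightarrow> \<exists>u v. u \<noteq> v \<and> M = {#u, u, v#}"
  shows "Goal S P"
proof -
  have U: "U = {p, q, r}"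
    by (rule card3eq[OF finU cardU _ d]) (use inU[OF h1] inU[OF h2] in auto)
  have e1: "2 * p + q = 2 * pi" using sum3[OF h1] by simp
  have e2: "2 * q + r = 2 * pi" using sum3[OF h2] by simp
  have n1: "2 * p + r \<noteq> 2 * pi"
  proof
    assume "2 * p + r = 2 * pi" hence "r = q" using e1 by linarith
    thus False using d by simp
  qed
  have n2: "2 * q + p \<noteq> 2 * pi"
  proof
    assume "2 * q + p = 2 * pi" hence "r = p" using e2 by linarith
    thus False using d by simp
  qed
  have n3: "2 * r + p \<noteq> 2 * pi"
  proof
    assume "2 * r + p = 2 * pi" hence "p = q" using e1 e2 by linarith
    thus False using d by simp
  qed
  have n4: "2 * r + q \<noteq> 2 * pi"
  proof
    assume "2 * r + q = 2 * pi" hence "r = p" using e1 by linarith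
    thus False using d by simp
  qed
  have all2: "M = {#p, p, q#} \<or> M = {#q, q, r#}" if M: "M \<in> S" for M
  proof -
    obtain u v where uv: "u \<noteq> v" "M = {#u, u, v#}" using allM[OF M] by blast
    have s: "2 * u + v = 2 * pi" using sum3[of u u v] M uv by simp
    have "u \<in> {p, q, r}" "v \<in> {p, q, r}" using inU[OF M] uv U by auto
    then show ?thesis using s uv n1 n2 n3 n4 by (auto simp: algebra_simps)
  qed
  have "S = {{#p, p, q#}, {#q, q, r#}}" using all2 h1 h2 by blast
  then show ?thesis using shape4 d by blast
qed

lemma caseB:
  assumes nd: "\<And>M x y z. M \<in> S \<Longrightarrow> M = {#x, y, z#} \<Longrightarrow> \<not> distinct [x, y, z]"
  shows "Goal S P"
proof -
  have formB: "\<exists>u v. M = {#u, u, v#}" if M: "M \<in> S" for M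
  proof -
    obtain p q r where pqr: "M = {#p, q, r#}" using form3[OF M] by blast
    have "p = q \<or> p = r \<or> q = r" using nd[OF M pqr] by auto
    moreover have "p = r \<Longrightarrow> M = {#p, p, q#}" using pqr by (simp add: add_mset_commute)
    moreover have "q = r \<Longrightarrow> M = {#q, q, p#}" using pqr by (simp add: add_mset_commute)
    ultimately show ?thesis using pqr by blast
  qed
  show ?thesis
  proof (cases "\<exists>t. {#t, t, t#} \<in> S")
    case True
    then obtain t where ht: "{#t, t, t#} \<in> S" by blast
    have allM: "M = {#t, t, t#} \<or> (\<exists>u v. u \<noteq> v \<and> u \<noteq> t \<and> v \<noteq> t \<and> M = {#u, u, v#})"
      if M: "M \<in> S" for M
    proof -
      obtain u v where uv: "M = {#u, u, v#}" using formB[OF M] by blast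
      have s: "2 * u + v = 3 * t" using sum3[of u u v] sum3[OF ht] M uv by simp
      show ?thesis
      proof (cases "u = v")
        case True then show ?thesis using s uv by simp
      next
        case False
        have "u \<noteq> t" using s False by auto
        moreover have "v \<noteq> t" using s False by auto
        ultimately show ?thesis using False uv by blast
      qed
    qed
    show ?thesis
    proof (cases "\<forall>M\<in>S. M = {#t, t, t#}")
      case True
      hence "S = {{#t, t, t#}}" using ht by blast
      then show ?thesis using shape1 by blast
    next
      case False
      then obtain M1 u v where M1: "M1 \<in> S" "u \<noteq> v" "u \<noteq> t" "v \<noteq> t" "M1 = {#u, u, v#}"
        using allM by blast
      have d: "distinct [u, v, t]" using M1 by auto
      have U: "U = {u, v, t}"
        by (rule card3eq[OF finU cardU _ d]) (use inU[OF M1(1)] inU[OF ht] M1(5) in auto)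
      have e1: "2 * u + v = 2 * pi" using sum3[of u u v] M1 by simp
      have all2: "M = {#u, u, v#} \<or> M = {#t, t, t#}" if M: "M \<in> S" for M
      proof -
        from allM[OF M] show ?thesis
        proof
          assume "\<exists>u' v'. u' \<noteq> v' \<and> u' \<noteq> t \<and> v' \<noteq> t \<and> M = {#u', u', v'#}"
          then obtain u' v' where uv': "u' \<noteq> v'" "u' \<noteq> t" "v' \<noteq> t" "M = {#u', u', v'#}" by blast
          have s: "2 * u' + v' = 2 * pi" using sum3[of u' u' v'] M uv' by simp
          have "u' \<in> {u, v}" "v' \<in> {u, v}" using inU[OF M] uv' U by auto
          then show ?thesis using s e1 uv' M1 by (auto simp: algebra_simps)
        qed simp
      qed
      have "S = {{#u, u, v#}, {#t, t, t#}}" using all2 M1 ht by blast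
      then show ?thesis using shape5 d by blast
    qed
  next
    case nopure: False
    have allM: "\<exists>u v. u \<noteq> v \<and> M = {#u, u, v#}" if M: "M \<in> S" for M
    proof -
      obtain u v where uv: "M = {#u, u, v#}" using formB[OF M] by blast
      have "u \<noteq> v" using nopure M uv by blast
      thus ?thesis using uv by blast
    qed
    obtain M1 where M1S: "M1 \<in> S" using Sne by blast
    then obtain x y where xy: "x \<noteq> y" "M1 = {#x, x, y#}" using allM by blast
    show ?thesis
    proof (cases "S = {M1}")
      case True
      hence "S = {{#y, x, x#}}" using xy by (simp add: add_mset_commute)
      then show ?thesis using shape2[of y x] xy by auto
    next
      case False
      then obtain M2 where M2S: "M2 \<in> S" "M2 \<noteq> M1" using M1S by blast
      then obtain x' y' where xy': "x' \<noteq> y'" "M2 = {#x', x', y'#}" using allM by blast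
      have s1: "2 * x + y = 2 * pi" using sum3[of x x y] M1S xy by simp
      have s2: "2 * x' + y' = 2 * pi" using sum3[of x' x' y'] M2S xy' by simp
      have "\<exists>p q r. {#p, p, q#} \<in> S \<and> {#q, q, r#} \<in> S \<and> distinct [p, q, r]"
      proof (cases "x' = x")
        case True
        hence "y' = y" using s1 s2 by simp
        thus ?thesis using True xy xy' M2S by simp
      next
        case nx: False
        show ?thesis
        proof (cases "x' = y")
          case True
          have "y' \<noteq> x"
          proof
            assume "y' = x" hence "x = y" using s1 s2 True by simp
            thus False using xy by simp
          qed
          thus ?thesis using True xy xy' M1S M2S by (intro exI[of _ x] exI[of _ y] exI[of _ y']) auto
        next
          case ny: False
          show ?thesis
          proof (cases "y' = x")
            case True
            thus ?thesis using nx ny xy xy' M1S M2S by (intro exI[of _ x'] exI[of _ x] exI[of _ y]) auto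
          next
            case nyx: False
            have "y' \<noteq> y"
            proof
              assume "y' = y" hence "x = x'" using s1 s2 by simp
              thus False using nx by simp
            qed
            hence "distinct [x, y, x', y']" using nx ny nyx xy xy' by auto
            moreover have "{x, y, x', y'} \<subseteq> U" using inU[OF M1S] inU[OF M2S(1)] xy xy' by auto
            ultimately show ?thesis using card4[OF finU cardU] by blast
          qed
        qed
      qed
      then obtain p q r where "{#p, p, q#} \<in> S" "{#q, q, r#} \<in> S" "distinct [p, q, r]" by blast
      then show ?thesis using chain_case allM by blast
    qed
  qed
qed

theorem classify: "Goal S P"
proof (cases "\<exists>M x y z. M \<in> S \<and> M = {#x, y, z#} \<and> distinct [x, y, z]")
  case True
  then show ?thesis using caseA by blast
next
  case False
  then show ?thesis using caseB by blast
qed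

end


lemma orb_orbit:
  assumes "g permutes D" "finite D"
  shows "orb g d = orbit g d"
proof -
  have "permutation g" using assms permutation_permutes by blast
  then show ?thesis unfolding orb_def by (simp add: orbit_altdef_permutation)
qed

lemma orb_self: "d \<in> orb g d"
  unfolding orb_def by (auto intro: exI[of _ 0])

lemma orb_sub:
  assumes "g permutes D" "finite D" "d \<in> D"
  shows "orb g d \<subseteq> D"
  using permutes_orbit_subset[OF assms(1,3)] orb_orbit[OF assms(1,2)] by simp

lemma orb_eq:
  assumes "g permutes D" "finite D" "e \<in> orb g d"
  shows "orb g e = orb g d"
proof -
  have "cyclic_on g (orbit g d)" using cyclic_on_orbit[OF assms(1,2)] .
  then show ?thesis using assms orb_orbit[OF assms(1,2)] orbit_cyclic_eq3 by metis
qed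

lemma orb_sum:
  fixes h :: "'d \<Rightarrow> 'a::comm_monoid_add"
  assumes "g permutes D" "finite D"
  shows "(\<Sum>Q\<in>orb g ` D. \<Sum>d\<in>Q. h d) = (\<Sum>d\<in>D. h d)"
proof -
  have U: "\<Union>(orb g ` D) = D"
  proof
    show "\<Union>(orb g ` D) \<subseteq> D" using orb_sub[OF assms] by blast
    show "D \<subseteq> \<Union>(orb g ` D)"
    proof
      fix x assume "x \<in> D"
      then show "x \<in> \<Union>(orb g ` D)" using orb_self[of x g] by blast
    qed
  qed
  have fin: "\<forall>A\<in>orb g ` D. finite A"
  proof
    fix A assume "A \<in> orb g ` D"
    then obtain a where "a \<in> D" "A = orb g a" by blast
    then show "finite A" using orb_sub[OF assms] finite_subset[OF _ assms(2)] by blast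
  qed
  have dis: "\<forall>A\<in>orb g ` D. \<forall>B\<in>orb g ` D. A \<noteq> B \<longrightarrow> A \<inter> B = {}"
  proof (intro ballI impI)
    fix A B assume A: "A \<in> orb g ` D" and B: "B \<in> orb g ` D" and ne: "A \<noteq> B"
    show "A \<inter> B = {}"
    proof (rule ccontr)
      assume "A \<inter> B \<noteq> {}"
      then obtain e where e: "e \<in> A" "e \<in> B" by blast
      from A obtain a where a: "A = orb g a" by blast
      from B obtain b where b: "B = orb g b" by blast
      have "orb g e = A" using orb_eq[OF assms] e a by blast
      moreover have "orb g e = B" using orb_eq[OF assms] e b by blast
      ultimately show False using ne by simp
    qed
  qed
  have "(\<Sum>d\<in>\<Union>(orb g ` D). h d) = (\<Sum>Q\<in>orb g ` D. \<Sum>d\<in>Q. h d)"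
    using sum.Union_disjoint[OF fin dis, of h] by (simp add: comp_def)
  then show ?thesis using U by simp
qed

lemma orb_inv:
  assumes "ep d \<noteq> d" "ep (ep d) = d"
  shows "orb ep d = {d, ep d}"
proof
  have "(ep ^^ n) d \<in> {d, ep d}" for n
    by (induction n) (use assms in auto)
  then show "orb ep d \<subseteq> {d, ep d}" unfolding orb_def by auto
next
  have "ep d = (ep ^^ 1) d" by simp
  hence "ep d \<in> orb ep d" unfolding orb_def by blast
  then show "{d, ep d} \<subseteq> orb ep d" using orb_self[of d ep] by blast
qed

lemma count_img:
  assumes "finite v"
  shows "count (image_mset th (mset_set v)) x = (\<Sum>d\<in>v. if th d = x then 1 else 0)"
  using assms by (induction v rule: finite_induct) auto

theorem proposition5:
  fixes D :: "'d set" and sg ep :: "'d \<Rightarrow> 'd" and th :: "'d \<Rightarrow> real"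
    and P :: "real multiset"
  assumes tiling: "angle_congruent D sg ep th P"
    and many: "card (map_faces D sg ep) > 12"
    and three: "card (\<Union>M\<in>deg3_combos D sg th. set_mset M) \<le> 3"
  shows "\<exists>a b c d :: real. distinct [a, b, c, d] \<and>
    (let S = deg3_combos D sg th in
      (S = {{#a, a, a#}} \<and> P = {#a, a, a, a, b#}) \<or>
      (S = {{#a, b, b#}} \<and>
         (P = {#a, a, b, b, b#} \<or> P = {#a, a, a, b, b#} \<or> P = {#a, a, b, b, c#})) \<or>
      (S = {{#a, b, c#}, {#a, a, a#}} \<and>
         (P = {#a, a, a, b, c#} \<or> P = {#a, a, b, b, c#} \<or> P = {#a, a, b, c, d#})) \<or>
      (S = {{#a, b, b#}, {#a, a, c#}} \<and>
         (P = {#a, a, a, b, c#} \<or> P = {#a, a, b, b, c#} \<or> P = {#a, a, b, c, c#} \<or>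
          P = {#a, a, b, c, d#})) \<or>
      (S = {{#a, b, b#}, {#c, c, c#}} \<and>
         (P = {#a, a, b, b, c#} \<or> P = {#a, a, b, c, c#} \<or> P = {#a, b, b, b, c#} \<or>
          P = {#a, b, b, c, c#} \<or> P = {#a, b, c, c, c#} \<or>
          P = {#a, b, b, c, d#} \<or> P = {#a, b, c, c, d#})))"
proof -
  define V where "V = map_vertices D sg"
  define E where "E = map_edges D ep"
  define F where "F = map_faces D sg ep"
  define fn where "fn = card F"
  define V3 where "V3 = {v \<in> V. card v = 3}"
  define m where "m = (\<lambda>v. image_mset th (mset_set v))"
  define S where "S = deg3_combos D sg th"
  have T: "sphere_pentagon_tiling D sg ep" and thpos: "\<forall>d\<in>D. th d > 0"
    and vsum: "\<forall>v\<in>V. (\<Sum>d\<in>v. th d) = 2 * pi"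
    and fP: "\<forall>Q\<in>F. m Q = P"
    using tiling unfolding angle_congruent_def V_def F_def m_def by auto
  have finD: "finite D" and Dne: "D \<noteq> {}" and psg: "sg permutes D" and pep: "ep permutes D"
    and inv: "\<forall>d\<in>D. ep d \<noteq> d \<and> ep (ep d) = d"
    and euler: "int (card V) - int (card E) + int (card F) = 2"
    and deg: "\<forall>d\<in>D. card (orb sg d) \<ge> 3"
    and face5: "\<forall>d\<in>D. card (orb (sg \<circ> ep) d) = 5"
    using T unfolding sphere_pentagon_tiling_def V_def E_def F_def map_vertices_def map_edges_def
      map_faces_def by auto
  have pphi: "(sg \<circ> ep) permutes D" using permutes_compose[OF pep psg] .
  have Vdef: "V = orb sg ` D" unfolding V_def map_vertices_def ..
  have Edef: "E = orb ep ` D" unfolding E_def map_edges_def ..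
  have Fdef: "F = orb (sg \<circ> ep) ` D" unfolding F_def map_faces_def ..
  have finV: "finite V" using finD Vdef by simp
  have finF: "finite F" using finD Fdef by simp
  have finE: "finite E" using finD Edef by simp
  have vfin: "finite v" if "v \<in> V" for v
    using that Vdef orb_sub[OF psg finD] finD finite_subset by blast
  have cD_F: "card D = 5 * fn"
  proof -
    have "card D = (\<Sum>Q\<in>F. \<Sum>d\<in>Q. (1::nat))" using orb_sum[OF pphi finD, of "\<lambda>_. 1::nat"] Fdef by simp
    also have "\<dots> = (\<Sum>Q\<in>F. 5)"
      by (rule sum.cong) (use face5 Fdef in auto)
    finally show ?thesis unfolding fn_def by simp
  qed
  have cD_E: "card D = 2 * card E"
  proof -
    have "card D = (\<Sum>Q\<in>E. \<Sum>d\<in>Q. (1::nat))" using orb_sum[OF pep finD, of "\<lambda>_. 1::nat"] Edef by simp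
    also have "\<dots> = (\<Sum>Q\<in>E. 2)"
    proof (rule sum.cong)
      fix Q assume "Q \<in> E"
      then obtain d where d: "d \<in> D" "Q = orb ep d" using Edef by blast
      then have Qe: "Q = {d, ep d}" using orb_inv[of ep d] inv by blast
      have "ep d \<noteq> d" using inv d(1) by blast
      then show "(\<Sum>d\<in>Q. (1::nat)) = 2" using Qe by simp
    qed simp
    finally show ?thesis by simp
  qed
  have cD_V: "card D = (\<Sum>v\<in>V. card v)"
    using orb_sum[OF psg finD, of "\<lambda>_. 1::nat"] Vdef by simp
  have degV: "card v \<ge> 3" if "v \<in> V" for v using deg that Vdef by auto
  have V3card: "card V3 = (\<Sum>v\<in>V. if card v = 3 then 1 else 0)"
    unfolding V3_def using sum.inter_filter[OF finV, of "\<lambda>_. 1::nat" "\<lambda>v. card v = 3"] by simp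
  have "(\<Sum>v\<in>V. (4::nat)) \<le> (\<Sum>v\<in>V. card v + (if card v = 3 then 1 else 0))"
    by (rule sum_mono) (use degV in \<open>fastforce\<close>)
  hence ineq: "4 * card V \<le> card D + card V3" using cD_V V3card by (simp add: sum.distrib)
  have V3big: "card V3 \<ge> fn + 8" using ineq euler cD_F cD_E unfolding fn_def by linarith
  have fn12: "fn > 12" using many unfolding fn_def F_def .
  have cnt: "(\<Sum>w\<in>V3. real (count (m w) x)) \<le> real (count P x) * real fn" for x
  proof -
    define h where "h = (\<lambda>d. if th d = x then 1 else (0::nat))"
    have "(\<Sum>w\<in>V3. count (m w) x) = (\<Sum>w\<in>V3. \<Sum>d\<in>w. h d)"
      by (rule sum.cong) (auto simp: m_def h_def V3_def count_img vfin)
    also have "\<dots> \<le> (\<Sum>w\<in>V. \<Sum>d\<in>w. h d)"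
      by (rule sum_mono2) (auto simp: finV V3_def)
    also have "\<dots> = (\<Sum>d\<in>D. h d)" using orb_sum[OF psg finD, of h] Vdef by simp
    also have "\<dots> = (\<Sum>Q\<in>F. \<Sum>d\<in>Q. h d)" using orb_sum[OF pphi finD, of h] Fdef by simp
    also have "\<dots> = (\<Sum>Q\<in>F. count P x)"
    proof (rule sum.cong)
      fix Q assume Q: "Q \<in> F"
      have "finite Q" using Q Fdef orb_sub[OF pphi finD] finD finite_subset by blast
      then have "count (m Q) x = (\<Sum>d\<in>Q. h d)" by (simp add: m_def h_def count_img)
      then show "(\<Sum>d\<in>Q. h d) = count P x" using fP Q by simp
    qed simp
    also have "\<dots> = count P x * fn" unfolding fn_def by simp
    finally have "(\<Sum>w\<in>V3. count (m w) x) \<le> count P x * fn" .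
    hence "real (\<Sum>w\<in>V3. count (m w) x) \<le> real (count P x * fn)" by (rule of_nat_mono)
    then show ?thesis by simp
  qed
  have Sdef: "S = m ` V3" unfolding S_def deg3_combos_def m_def V3_def V_def ..
  have combo: "size M = 3 \<and> sum_mset M = 2 * pi" if MS: "M \<in> S" for M
  proof -
    obtain v where v: "v \<in> V" "card v = 3" "M = m v" using MS Sdef V3_def by auto
    have "size M = 3" using v by (simp add: m_def)
    moreover have "sum_mset M = (\<Sum>d\<in>v. th d)" using v by (simp add: m_def sum_unfold_sum_mset)
    ultimately show ?thesis using vsum v by simp
  qed
  obtain d0 where d0: "d0 \<in> D" using Dne by blast
  have F0: "orb (sg \<circ> ep) d0 \<in> F" using d0 Fdef by simp
  have sizeP: "size P = 5"
  proof -
    have "size (m (orb (sg \<circ> ep) d0)) = card (orb (sg \<circ> ep) d0)" by (simp add: m_def)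
    then show ?thesis using fP F0 face5 d0 by simp
  qed
  have sumF: "(\<Sum>d\<in>D. th d) = real fn * sum_mset P"
  proof -
    have "(\<Sum>d\<in>D. th d) = (\<Sum>Q\<in>F. \<Sum>d\<in>Q. th d)" using orb_sum[OF pphi finD, of th] Fdef by simp
    also have "\<dots> = (\<Sum>Q\<in>F. sum_mset P)"
    proof (rule sum.cong)
      fix Q assume Q: "Q \<in> F"
      have "(\<Sum>d\<in>Q. th d) = sum_mset (m Q)" by (simp add: m_def sum_unfold_sum_mset)
      then show "(\<Sum>d\<in>Q. th d) = sum_mset P" using fP Q by simp
    qed simp
    finally show ?thesis unfolding fn_def by simp
  qed
  have sumV: "(\<Sum>d\<in>D. th d) = real (card V) * (2 * pi)"
  proof -
    have "(\<Sum>d\<in>D. th d) = (\<Sum>v\<in>V. \<Sum>d\<in>v. th d)" using orb_sum[OF psg finD, of th] Vdef by simp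
    also have "\<dots> = (\<Sum>v\<in>V. 2 * pi)" by (rule sum.cong) (use vsum in auto)
    finally show ?thesis by simp
  qed
  have V2: "2 * real (card V) = 3 * real fn + 4" using euler cD_F cD_E unfolding fn_def by linarith
  have sumP: "sum_mset P = 3 * pi + 4 * pi / real fn"
  proof -
    have fpos: "real fn > 0" using fn12 by simp
    have "real fn * sum_mset P = (3 * real fn + 4) * pi" using sumF sumV V2 by (simp add: algebra_simps)
    then show ?thesis using fpos by (simp add: field_simps)
  qed
  interpret core S P "real fn" V3 m
  proof
    show "finite V3" using finV V3_def by simp
    show "S = m ` V3" by (rule Sdef)
    show "real (card V3) > real fn" using V3big by simp
    show "real fn > 12" using fn12 by simp
    show "\<And>x. (\<Sum>w\<in>V3. real (count (m w) x)) \<le> real (count P x) * real fn" by (rule cnt)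
    show "\<And>M. M \<in> S \<Longrightarrow> size M = 3 \<and> sum_mset M = 2 * pi" by (rule combo)
    show "size P = 5" by (rule sizeP)
    show "sum_mset P = 3 * pi + 4 * pi / real fn" by (rule sumP)
    show "card (\<Union>M\<in>S. set_mset M) \<le> 3" using three unfolding S_def .
  qed
  have "Goal S P" by (rule classify)
  then show ?thesis unfolding Goal_def S_def Let_def .
qed

end
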